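(* Let $(Q,\cdot)$ be a quasigroup satisfying $x(y(yz))=(x(yy))z$ for all $x,y,z\in Q$ (an LC4-quasigroup). Then $Q$ satisfies $x(x(yz))=(x(xy))z$ for all $x,y,z\in Q$ (i.e. $Q$ is an LC2-quasigroup).
   Context: A quasigroup is a set $Q$ with a binary operation $\cdot$ (written as juxtaposition) such that for all $a,b\in Q$ each of the equations $ax=b$ and $ya=b$ has a unique solution in $Q$. *)

theory Defs
  imports Main
begin

definition quasigroup :: "'a set \<Rightarrow> ('a \<Rightarrow> 'a \<Rightarrow> 'a) \<Rightarrow> bool" where
  "quasigroup Q f \<longleftrightarrow>
     (\<forall>a\<in>Q. \<forall>b\<in>Q. f a b \<in> Q) \<and>
     (\<forall>a\<in>Q. \<forall>b\<in>Q. \<exists>!x. x \<in> Q \<and> f a x = b) \<and>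
     (\<forall>a\<in>Q. \<forall>b\<in>Q. \<exists>!y. y \<in> Q \<and> f y a = b)"

end

theory Submission
  imports Defs
begin

theorem mainTheorem8:
  fixes Q :: "'a set" and f :: "'a \<Rightarrow> 'a \<Rightarrow> 'a"
  assumes "quasigroup Q f"
    and LC4: "\<forall>x\<in>Q. \<forall>y\<in>Q. \<forall>z\<in>Q. f x (f y (f y z)) = f (f x (f y y)) z"
  shows "\<forall>x\<in>Q. \<forall>y\<in>Q. \<forall>z\<in>Q. f x (f x (f y z)) = f (f x (f x y)) z"
proof (intro ballI)
  fix x y z assume xQ: "x \<in> Q" and yQ: "y \<in> Q" and zQ: "z \<in> Q"
  have QQ: "(\<forall>a\<in>Q. \<forall>b\<in>Q. f a b \<in> Q)"
    "\<forall>a\<in>Q. \<forall>b\<in>Q. \<exists>!x. x \<in> Q \<and> f a x = b"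
    "\<forall>a\<in>Q. \<forall>b\<in>Q. \<exists>!y. y \<in> Q \<and> f y a = b"
    using assms(1) unfolding quasigroup_def by simp_all
  have C: "\<And>a b. a \<in> Q \<Longrightarrow> b \<in> Q \<Longrightarrow> f a b \<in> Q"
    using QQ(1) by blast
  have LD: "\<And>a b. a \<in> Q \<Longrightarrow> b \<in> Q \<Longrightarrow> \<exists>u\<in>Q. f a u = b"
  proof -
    fix a b assume "a \<in> Q" "b \<in> Q"
    then have "\<exists>!x. x \<in> Q \<and> f a x = b" using QQ(2) by blast
    then show "\<exists>u\<in>Q. f a u = b" by (elim ex1E) blast
  qed
  have RD: "\<And>a b. a \<in> Q \<Longrightarrow> b \<in> Q \<Longrightarrow> \<exists>u\<in>Q. f u a = b"
  proof -
    fix a b assume "a \<in> Q" "b \<in> Q"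
    then have "\<exists>!x. x \<in> Q \<and> f x a = b" using QQ(3) by blast
    then show "\<exists>u\<in>Q. f u a = b" by (elim ex1E) blast
  qed
  have LC: "\<And>a b c. a \<in> Q \<Longrightarrow> b \<in> Q \<Longrightarrow> c \<in> Q \<Longrightarrow> f a b = f a c \<Longrightarrow> b = c"
  proof -
    fix a b c assume H: "a \<in> Q" "b \<in> Q" "c \<in> Q" "f a b = f a c"
    then have "\<exists>!x. x \<in> Q \<and> f a x = f a b" using QQ(2) C by blast
    then show "b = c" using H by (elim ex1E) metis
  qed
  have L4: "\<And>a b c. a \<in> Q \<Longrightarrow> b \<in> Q \<Longrightarrow> c \<in> Q \<Longrightarrow> f a (f b (f b c)) = f (f a (f b b)) c"
    using LC4 by blast
  obtain e where eQ: "e \<in> Q" and ye: "f y e = y" using LD[OF yQ yQ] by blast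
  have E: "\<And>b. b \<in> Q \<Longrightarrow> f b e = b"
  proof -
    fix b assume bQ: "b \<in> Q"
    obtain a where aQ: "a \<in> Q" and ab: "f a (f y y) = b" using RD[OF C[OF yQ yQ] bQ] by blast
    have "f a (f y (f y e)) = f (f a (f y y)) e" using L4[OF aQ yQ eQ] .
    then show "f b e = b" using ye ab by simp
  qed
  have INV: "\<And>a. a \<in> Q \<Longrightarrow> \<exists>a'\<in>Q. (\<forall>u\<in>Q. f a' (f a u) = u) \<and> (\<forall>u\<in>Q. f a (f a' u) = u)"
  proof -
    fix a assume aQ: "a \<in> Q"
    obtain a' where a'Q: "a' \<in> Q" and aa: "f a' (f a a) = a" using RD[OF C[OF aQ aQ] aQ] by blast
    have 1: "\<forall>u\<in>Q. f a' (f a u) = u"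
    proof
      fix u assume uQ: "u \<in> Q"
      obtain v where vQ: "v \<in> Q" and av: "f a v = u" using LD[OF aQ uQ] by blast
      have "f a' (f a (f a v)) = f (f a' (f a a)) v" using L4[OF a'Q aQ vQ] .
      then show "f a' (f a u) = u" using aa av by simp
    qed
    have 2: "\<forall>u\<in>Q. f a (f a' u) = u"
    proof
      fix u assume uQ: "u \<in> Q"
      have "f a' (f a (f a' u)) = f a' u" using 1 C[OF a'Q uQ] by blast
      then show "f a (f a' u) = u" using LC[OF a'Q C[OF aQ C[OF a'Q uQ]] uQ] by blast
    qed
    show "\<exists>a'\<in>Q. (\<forall>u\<in>Q. f a' (f a u) = u) \<and> (\<forall>u\<in>Q. f a (f a' u) = u)"
      using a'Q 1 2 by blast
  qed
  obtain y' where y'Q: "y' \<in> Q" and y'1: "\<forall>u\<in>Q. f y' (f y u) = u" using INV[OF yQ] by blast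
  obtain w where wQ: "w \<in> Q" and wx: "f w (f x x) = y'" using RD[OF C[OF xQ xQ] y'Q] by blast
  obtain w' where w'Q: "w' \<in> Q" and w'2: "\<forall>u\<in>Q. f w (f w' u) = u" using INV[OF wQ] by blast
  have KEY: "\<And>u. u \<in> Q \<Longrightarrow> f x (f x (f y u)) = f w' u"
  proof -
    fix u assume uQ: "u \<in> Q"
    have "f w (f x (f x (f y u))) = f y' (f y u)" using L4[OF wQ xQ C[OF yQ uQ]] wx by simp
    also have "\<dots> = u" using y'1 uQ by blast
    also have "\<dots> = f w (f w' u)" using w'2 uQ by simp
    finally show "f x (f x (f y u)) = f w' u"
      using LC[OF wQ C[OF xQ C[OF xQ C[OF yQ uQ]]] C[OF w'Q uQ]] by blast
  qed
  have "f x (f x y) = w'" using KEY[OF eQ] E[OF yQ] E[OF w'Q] by simp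
  then show "f x (f x (f y z)) = f (f x (f x y)) z" using KEY[OF zQ] by simp
qed

end
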